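(* Assume (H1), (H2) and (H3) from the context hold, and that $\partial_if_j(u)\ge0$ for $i\ne j$ and $u\in[0,k]$. Then $\mathcal{T}$ is monotone on $\mathcal{A}$: if $u,v\in\mathcal{A}$ with $u\le v$ on $\mathbb{R}$, then $\mathcal{T}[u]\le\mathcal{T}[v]$ on $\mathbb{R}$. Consequently $\mathcal{T}(\mathcal{A})\subseteq\mathcal{A}$. Furthermore, if $u\in\mathcal{A}$ and every component $u_i$ is nondecreasing on $\mathbb{R}$, then every $\mathcal{T}_i[u]$ is nondecreasing on $\mathbb{R}$.
   Context: Let $N\ge1$ and $D=\mathrm{diag}(d_1,\dots,d_N)$ with $d_i>0$. Vector inequalities are componentwise; $u\gg0$ means all components positive; $[0,r]=\{u:0\le u\le r\}$; $\mathcal{C}_r$ is the set of continuous $\mathbb{R}\to[0,r]$ maps. (H1) - $k^+\gg0$; $f:[0,k^+]\to\mathbb{R}^N$ is continuous and piecewise twice continuously differentiable; solutions of $u_t=Du_{xx}+f(u)$ with data in $\mathcal{C}_{k^+}$ exist globally in $\mathcal{C}_{k^+}$. - $0\ll k^-\le k\le k^+$; continuous piecewise $C^2$ maps $f^\pm:[0,k^\pm]\to\mathbb{R}^N$ satisfy $f^-\le f\le f^+$ on $[0,k^+]$. - $f(0)=f(k)=0$, $f^\pm(0)=f^\pm(k^\pm)=0$, with no other positive equilibria between $0$ and $k$, respectively $k^\pm$. - $f^\pm$ are cooperative on $[0,k^\pm]$ and share with $f$ the Jacobian $f'(0)$ at $0$. - In the cooperative case, $f^\pm=f$ and $k^\pm=k$.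 (H2) - $A_\lambda=(a^{ij}_\lambda)=\mathrm{diag}(d_i\lambda^2)+f'(0)$ is block lower triangular for $\lambda>0$, with irreducible or $1\times1$ zero diagonal blocks. - Its first block has positive principal eigenvalue $\Psi(A_\lambda)$ (where $\Psi(A)=\rho(A+\alpha I)-\alpha$), strictly larger than those of the other blocks. - An eigenvector $\nu_\lambda=(\nu^i_\lambda)\gg0$ for $\Psi(A_\lambda)$ exists and is continuous in $\lambda$. Speeds. $\Phi(\lambda)=\Psi(A_\lambda)/\lambda$ and $c^*=\inf_{\lambda>0}\Phi$. (H3) $f^\pm(\alpha\nu_\lambda)\le\alpha f'(0)\nu_\lambda$ for all $\alpha,\lambda>0$. Setup. Fix $c>c^*$, and let $\Lambda_c$ be the smallest positive solution of $\Phi(\lambda)=c$. The operator $\mathcal{T}$. $\beta>\max\{|\partial_if_j(u)|:u\in[0,k^+]\}$ is a fixed, sufficiently large constant. Set $\lambda_{1i}=\frac{-c+\sqrt{c^2+4\beta d_i}}{2d_i}$ and $\lambda_{2i}=\frac{c+\sqrt{c^2+4\beta d_i}}{2d_i}$, with $\lambda_{2i}>\lambda_{1i}>2\Lambda_c$. Let $H_i(u)=\beta u_i+f_i(u)$ and $$\mathcal{T}_i[u](\xi)=\frac{1}{d_i(\lambda_{1i}+\lambda_{2i})}\Big(\int_{-\infty}^{\xi}e^{-\lambda_{1i}(\xi-s)}H_i(u(s))ds+\int_{\xi}^{\infty}e^{\lambda_{2i}(\xi-s)}H_i(u(s))ds\Big).$$ Upper and lower solutions. Let $\phi^+_i(\xi)=\min\{k_i,\nu^i_{\Lambda_c}e^{\Lambda_c\xi}\}$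 and $\phi^-_i(\xi)=\max\{0,\nu^i_{\Lambda_c}e^{\Lambda_c\xi}-q\nu^i_{\gamma\Lambda_c}e^{\gamma\Lambda_c\xi}\}$. Here $\gamma\in(1,2)$ satisfies $\Phi(\gamma\Lambda_c)<c$ and $\beta\nu^i_{\gamma\Lambda_c}-\nu^i_{\gamma\Lambda_c}d_i(\gamma\Lambda_c)^2+\sum_j\nu^j_{\gamma\Lambda_c}a^{ij}_{\gamma\Lambda_c}>0$ for all $i$. The constant $q>1$ is fixed so large that $\phi^-<\phi^+$ and $\mathcal{T}_i[\phi^-]\ge\phi^-_i$ on $\mathbb{R}$; and $\mathcal{T}_i[\phi^+]\le\phi^+_i$ on $\mathbb{R}$. The space $\mathcal{A}$. Fix $0<\varrho<\Lambda_c$. Let $\mathcal{E}_\varrho$ be the Banach space of continuous $u:\mathbb{R}\to\mathbb{R}^N$ with $\|u\|_\varrho=\sum_i\sup_\xi|u_i(\xi)|e^{-\varrho\xi}<\infty$, and $$\mathcal{A}=\{u\in\mathcal{E}_\varrho:\phi^-_i\le u_i\le\phi^+_i \text{ on }\mathbb{R}\text{ for all }i\}.$$ *)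

theory Defs
  imports "HOL-Analysis.Analysis"
begin

text \<open>Vectors in R^N are modelled as real^'n, with N = CARD('n).
  The order on real^'n is componentwise; the box [0,r] is {0..r}.\<close>

definition pos_vec :: "real^'n \<Rightarrow> bool" where
  "pos_vec u \<longleftrightarrow> (\<forall>i. u $ i > 0)"

definition C2_on :: "(real^'n) set \<Rightarrow> (real^'n \<Rightarrow> real^'n) \<Rightarrow> bool" where
  "C2_on U g \<longleftrightarrow>
     (\<exists>(g1 :: (real^'n) \<Rightarrow> ((real^'n) \<Rightarrow>\<^sub>L (real^'n)))
        (g2 :: (real^'n) \<Rightarrow> ((real^'n) \<Rightarrow>\<^sub>L ((real^'n) \<Rightarrow>\<^sub>L (real^'n)))).
        (\<forall>x\<in>U. (g has_derivative blinfun_apply (g1 x)) (at x)) \<and>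
        (\<forall>x\<in>U. (g1 has_derivative blinfun_apply (g2 x)) (at x)) \<and>
        continuous_on U g2)"

definition pw_C2_on :: "(real^'n) set \<Rightarrow> (real^'n \<Rightarrow> real^'n) \<Rightarrow> bool" where
  "pw_C2_on S f \<longleftrightarrow>
     (\<exists>F :: ((real^'n) set \<times> (real^'n \<Rightarrow> real^'n)) set.
        finite F \<and> S = \<Union>(fst ` F) \<and>
        (\<forall>(P, g)\<in>F. closed P \<and> closure (interior P) = P \<and>
            (\<exists>U. open U \<and> P \<subseteq> U \<and> C2_on U g \<and> (\<forall>x\<in>P. f x = g x))))"

definition pderiv_at :: "(real^'n \<Rightarrow> real^'n) \<Rightarrow> (real^'n \<Rightarrow> real^'n) \<Rightarrow> 'n \<Rightarrow> 'n \<Rightarrow> real" where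
  "pderiv_at L f i j = L (axis i 1) $ j"

definition cooperative_on :: "(real^'n) set \<Rightarrow> (real^'n) set \<Rightarrow> (real^'n \<Rightarrow> real^'n) \<Rightarrow> bool" where
  "cooperative_on S T f \<longleftrightarrow>
     (\<forall>u\<in>T. \<forall>L. (f has_derivative L) (at u within S) \<longrightarrow>
        (\<forall>i j. i \<noteq> j \<longrightarrow> L (axis i 1) $ j \<ge> 0))"

text \<open>Global existence in C_r of classical solutions of u_t = D u_xx + f(u).\<close>
definition pde_global_solvable :: "real^'n \<Rightarrow> (real^'n \<Rightarrow> real^'n) \<Rightarrow> real^'n \<Rightarrow> bool" where
  "pde_global_solvable d f r \<longleftrightarrow>
     (\<forall>u0 :: real \<Rightarrow> real^'n. continuous_on UNIV u0 \<and> (\<forall>x. u0 x \<in> {0..r}) \<longrightarrow>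
       (\<exists>u :: real \<Rightarrow> real \<Rightarrow> real^'n.
          (\<forall>x. u 0 x = u0 x) \<and>
          (\<forall>x. ((\<lambda>t. u t x) \<longlongrightarrow> u0 x) (at_right 0)) \<and>
          (\<forall>t\<ge>0. continuous_on UNIV (u t) \<and> (\<forall>x. u t x \<in> {0..r})) \<and>
          (\<forall>t>0. \<forall>x. \<forall>i. \<exists>ux uxx.
              (\<forall>y. ((\<lambda>y. u t y $ i) has_real_derivative ux y) (at y)) \<and>
              (ux has_real_derivative uxx) (at x) \<and>
              ((\<lambda>s. u s x $ i) has_real_derivative (d $ i * uxx + f (u t x) $ i)) (at t))))"

text \<open>Spectral radius of the principal submatrix of M on the index set S
  (maximal modulus of its complex eigenvalues).\<close>
definition spec_rad_on :: "'n set \<Rightarrow> real^'n^'n \<Rightarrow> real" where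
  "spec_rad_on S M = Max {cmod z | z. \<exists>v :: complex^'n. v \<noteq> 0 \<and> (\<forall>i. i \<notin> S \<longrightarrow> v $ i = 0) \<and>
       (\<forall>i\<in>S. (\<Sum>j\<in>S. complex_of_real (M $ i $ j) * v $ j) = z * v $ i)}"

text \<open>Psi(A) = rho(A + alpha I) - alpha, alpha chosen large (here the sum of absolute entries,
  which makes A + alpha I nonnegative for matrices with nonnegative off-diagonal entries),
  applied to the principal submatrix on S.\<close>
definition Psi_on :: "'n set \<Rightarrow> real^'n^'n \<Rightarrow> real" where
  "Psi_on S A = (let \<alpha> = (\<Sum>i\<in>UNIV. \<Sum>j\<in>UNIV. \<bar>A $ i $ j\<bar>) in
      spec_rad_on S (\<chi> i j. A $ i $ j + (if i = j then \<alpha> else 0)) - \<alpha>)"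

definition Psi :: "real^'n^'n \<Rightarrow> real" where
  "Psi A = Psi_on UNIV A"

definition Amat :: "real^'n \<Rightarrow> real^'n^'n \<Rightarrow> real \<Rightarrow> real^'n^'n" where
  "Amat d J lam = (\<chi> i j. (if i = j then d $ i * lam\<^sup>2 else 0) + J $ i $ j)"

definition Phi :: "real^'n \<Rightarrow> real^'n^'n \<Rightarrow> real \<Rightarrow> real" where
  "Phi d J lam = Psi (Amat d J lam) / lam"

definition cstar :: "real^'n \<Rightarrow> real^'n^'n \<Rightarrow> real" where
  "cstar d J = Inf (Phi d J ` {0<..})"

definition lam1 :: "real^'n \<Rightarrow> real \<Rightarrow> real \<Rightarrow> 'n \<Rightarrow> real" where
  "lam1 d c \<beta> i = (- c + sqrt (c\<^sup>2 + 4 * \<beta> * d $ i)) / (2 * d $ i)"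

definition lam2 :: "real^'n \<Rightarrow> real \<Rightarrow> real \<Rightarrow> 'n \<Rightarrow> real" where
  "lam2 d c \<beta> i = (c + sqrt (c\<^sup>2 + 4 * \<beta> * d $ i)) / (2 * d $ i)"

definition Hfun :: "real \<Rightarrow> (real^'n \<Rightarrow> real^'n) \<Rightarrow> real^'n \<Rightarrow> 'n \<Rightarrow> real" where
  "Hfun \<beta> f u i = \<beta> * u $ i + f u $ i"

definition Top :: "real^'n \<Rightarrow> real \<Rightarrow> real \<Rightarrow> (real^'n \<Rightarrow> real^'n) \<Rightarrow> (real \<Rightarrow> real^'n) \<Rightarrow> real \<Rightarrow> real^'n" where
  "Top d c \<beta> f u \<xi> = (\<chi> i.
     1 / (d $ i * (lam1 d c \<beta> i + lam2 d c \<beta> i)) *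
       (integral {..\<xi>} (\<lambda>s. exp (- lam1 d c \<beta> i * (\<xi> - s)) * Hfun \<beta> f (u s) i) +
        integral {\<xi>..} (\<lambda>s. exp (lam2 d c \<beta> i * (\<xi> - s)) * Hfun \<beta> f (u s) i)))"

definition phi_plus :: "real^'n \<Rightarrow> (real \<Rightarrow> real^'n) \<Rightarrow> real \<Rightarrow> real \<Rightarrow> real^'n" where
  "phi_plus k \<nu> \<Lambda> \<xi> = (\<chi> i. min (k $ i) (\<nu> \<Lambda> $ i * exp (\<Lambda> * \<xi>)))"

definition phi_minus :: "(real \<Rightarrow> real^'n) \<Rightarrow> real \<Rightarrow> real \<Rightarrow> real \<Rightarrow> real \<Rightarrow> real^'n" where
  "phi_minus \<nu> \<Lambda> \<gamma> q \<xi> = (\<chi> i. max 0 (\<nu> \<Lambda> $ i * exp (\<Lambda> * \<xi>) - q * \<nu> (\<gamma> * \<Lambda>) $ i * exp (\<gamma> * \<Lambda> * \<xi>)))"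

definition E_rho :: "real \<Rightarrow> (real \<Rightarrow> real^'n) set" where
  "E_rho \<rho> = {u. continuous_on UNIV u \<and> (\<forall>i. \<exists>B. \<forall>\<xi>. \<bar>u \<xi> $ i\<bar> * exp (- \<rho> * \<xi>) \<le> B)}"

definition Aset :: "real \<Rightarrow> (real \<Rightarrow> real^'n) \<Rightarrow> (real \<Rightarrow> real^'n) \<Rightarrow> (real \<Rightarrow> real^'n) set" where
  "Aset \<rho> phm php = {u \<in> E_rho \<rho>. \<forall>\<xi>. phm \<xi> \<le> u \<xi> \<and> u \<xi> \<le> php \<xi>}"

end

theory Submission
  imports Defs
begin

lemma dini_mono:
  fixes h :: "real \<Rightarrow> real"
  assumes ab: "a \<le> b" and hc: "continuous_on {a..b} h"
    and loc: "\<And>t e. a \<le> t \<Longrightarrow> t < b \<Longrightarrow> e > 0 \<Longrightarrow> eventually (\<lambda>s. h s - h t \<ge> - e * (s - t)) (at_right t)"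
  shows "h a \<le> h b"
proof -
  have key: "h b \<ge> h a - e * (b - a)" if e: "e > 0" for e
  proof -
    define S where "S = {t \<in> {a..b}. h a - e * (t - a) \<le> h t}"
    have cl: "closed S" unfolding S_def
      by (intro continuous_on_closed_Collect_le hc continuous_intros)
    have ne: "a \<in> S" using ab by (auto simp: S_def)
    have bd: "bdd_above S" unfolding S_def bdd_above_def by (intro exI[of _ b]) auto
    define m where "m = Sup S"
    have mS: "m \<in> S" unfolding m_def using closed_contains_Sup[OF _ bd cl] ne by auto
    have mb: "m = b"
    proof (rule ccontr)
      assume "m \<noteq> b"
      with mS have mlt: "m < b" and am: "a \<le> m" by (auto simp: S_def)
      from loc[OF am mlt e] obtain c where c: "c > m" and cc: "\<And>y. y > m \<Longrightarrow> y < c \<Longrightarrow> h y - h m \<ge> - e * (y - m)"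
        unfolding eventually_at_right_field by blast
      define y where "y = (m + min c b) / 2"
      have y1: "y > m" "y < c" "y \<le> b" using c mlt by (auto simp: y_def)
      have "h y \<ge> h m - e * (y - m)" using cc[OF y1(1,2)] by simp
      moreover have "h m \<ge> h a - e * (m - a)" using mS by (auto simp: S_def)
      ultimately have "h y \<ge> h a - e * (y - a)" by (simp add: algebra_simps)
      then have "y \<in> S" using y1 am by (auto simp: S_def)
      then have "y \<le> m" unfolding m_def by (rule cSup_upper[OF _ bd])
      with y1 show False by simp
    qed
    show ?thesis using mS mb by (auto simp: S_def)
  qed
  show ?thesis
  proof (rule ccontr)
    assume "\<not> h a \<le> h b"
    then have d: "h a - h b > 0" by simp
    show False
    proof (cases "a = b")
      case True then show False using d by simp
    next
      case False
      then have ba: "b - a > 0" using ab by simp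
      define e where "e = (h a - h b) / (2 * (b - a))"
      have e: "e > 0" using d ba by (simp add: e_def)
      have "e * (b - a) = (h a - h b) / 2" using ba by (simp add: e_def field_simps)
      then have "h b \<ge> h a - (h a - h b) / 2" using key[OF e] by metis
      then show False using d by (simp add: field_simps)
    qed
  qed
qed

lemma lin_expand:
  fixes L :: "real^'n \<Rightarrow> real^'n"
  assumes "linear L"
  shows "L w $ i = (\<Sum>j\<in>UNIV. w $ j * L (axis j 1) $ i)"
proof -
  have "L w = L (\<Sum>j\<in>UNIV. w $ j *\<^sub>R axis j 1)"
    using basis_expansion[of w] by (simp add: scalar_mult_eq_scaleR)
  also have "\<dots> = (\<Sum>j\<in>UNIV. w $ j *\<^sub>R L (axis j 1))"
    using assms by (simp add: linear_sum linear_scale)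
  finally show ?thesis by (simp add: sum_component)
qed

lemma good_pt:
  fixes L :: "real^'n \<Rightarrow> real^'n"
  assumes "linear L" and off: "\<And>j. j \<noteq> i \<Longrightarrow> L (axis j 1) $ i \<ge> 0"
    and diag: "\<bar>L (axis i 1) $ i\<bar> \<le> M" and M: "M < \<beta>" and w: "0 \<le> w"
  shows "\<beta> * w $ i + L w $ i \<ge> 0"
proof -
  have wj: "w $ j \<ge> 0" for j using w by (simp add: less_eq_vec_def)
  have "L w $ i = w $ i * L (axis i 1) $ i + (\<Sum>j\<in>UNIV - {i}. w $ j * L (axis j 1) $ i)"
    by (subst lin_expand[OF assms(1)]) (simp add: sum.remove[of UNIV i])
  moreover have "(\<Sum>j\<in>UNIV - {i}. w $ j * L (axis j 1) $ i) \<ge> 0"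
    by (intro sum_nonneg) (use wj off in auto)
  moreover have "w $ i * L (axis i 1) $ i \<ge> - M * w $ i"
  proof -
    have "L (axis i 1) $ i \<ge> - M" using diag by linarith
    then show ?thesis using wj[of i] mult_left_mono by (metis minus_mult_commute mult.commute)
  qed
  moreover have "\<beta> * w $ i \<ge> M * w $ i" using M wj[of i] by (simp add: mult_right_mono)
  ultimately show ?thesis by linarith
qed


lemma deriv_point:
  fixes f g :: "real^'n \<Rightarrow> real^'n" and D :: "real^'n \<Rightarrow> ((real^'n) \<Rightarrow>\<^sub>L (real^'n))"
  assumes U: "open U" "P \<subseteq> U" and clP: "closure (interior P) = P"
    and gd: "\<forall>y\<in>U. (g has_derivative blinfun_apply (D y)) (at y)"
    and Dc: "continuous_on U D"
    and fg: "\<forall>x\<in>P. f x = g x"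
    and Ob: "open Ob"
    and good: "\<And>y L. y \<in> Ob \<Longrightarrow> (f has_derivative L) (at y within Q) \<Longrightarrow> \<beta> * w$i + L w $ i \<ge> 0"
    and x: "x \<in> P" "x \<in> Ob"
  shows "\<beta> * w$i + blinfun_apply (D x) w $ i \<ge> 0"
proof -
  have xc: "x \<in> closure (interior P \<inter> Ob)"
    using open_Int_closure_subset[OF Ob, of "interior P"] x clP by (auto simp: Int_commute)
  have sub: "closure (interior P \<inter> Ob) \<subseteq> U"
    using closure_mono[of "interior P \<inter> Ob" "interior P"] clP U(2) by auto
  have cont: "continuous_on (closure (interior P \<inter> Ob)) (\<lambda>y. \<beta> * w$i + blinfun_apply (D y) w $ i)"
    by (intro continuous_intros continuous_on_subset[OF Dc sub])
  show ?thesis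
  proof (rule continuous_ge_on_closure[OF cont xc])
    fix y assume y: "y \<in> interior P \<inter> Ob"
    then have yU: "y \<in> U" using interior_subset U(2) by blast
    have "(g has_derivative blinfun_apply (D y)) (at y)" using gd yU by blast
    then have "(f has_derivative blinfun_apply (D y)) (at y)"
      by (rule has_derivative_transform_within_open[where s="interior P"])
         (use y fg interior_subset in \<open>auto dest: subsetD[OF interior_subset]\<close>)
    then have "(f has_derivative blinfun_apply (D y)) (at y within Q)"
      by (rule has_derivative_at_withinI)
    then show "\<beta> * w$i + blinfun_apply (D y) w $ i \<ge> 0" using good y by blast
  qed
qed


lemma seg_mono:
  fixes f :: "real^'n \<Rightarrow> real^'n" and F :: "((real^'n) set \<times> (real^'n \<Rightarrow> real^'n)) set"
    and UU :: "(real^'n) set \<times> (real^'n \<Rightarrow> real^'n) \<Rightarrow> (real^'n) set"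
    and DD :: "(real^'n) set \<times> (real^'n \<Rightarrow> real^'n) \<Rightarrow> real^'n \<Rightarrow> ((real^'n) \<Rightarrow>\<^sub>L (real^'n))"
  assumes F: "finite F" and cover: "Q \<subseteq> \<Union>(fst ` F)"
    and pc: "\<And>Pg. Pg \<in> F \<Longrightarrow> open (UU Pg) \<and> fst Pg \<subseteq> UU Pg \<and> closed (fst Pg) \<and>
        closure (interior (fst Pg)) = fst Pg \<and>
        (\<forall>y\<in>UU Pg. (snd Pg has_derivative blinfun_apply (DD Pg y)) (at y)) \<and>
        continuous_on (UU Pg) (DD Pg) \<and> (\<forall>x\<in>fst Pg. f x = snd Pg x)"
    and fc: "continuous_on Q f"
    and Ob: "open Ob" "Ob \<subseteq> Q"
    and good: "\<And>y L. y \<in> Ob \<Longrightarrow> (f has_derivative L) (at y within Q) \<Longrightarrow> \<beta> * w$i + L w $ i \<ge> 0"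
    and seg: "\<And>t. t \<in> {0..1} \<Longrightarrow> a + t *\<^sub>R w \<in> Ob"
  shows "\<beta> * a$i + f a $ i \<le> \<beta> * (a + w)$i + f (a + w) $ i"
proof -
  define p where "p = (\<lambda>s::real. a + s *\<^sub>R w)"
  define h where "h = (\<lambda>s. \<beta> * p s $ i + f (p s) $ i)"
  have pc': "continuous_on UNIV p" unfolding p_def by (intro continuous_intros)
  have hc: "continuous_on {0..1} h" unfolding h_def
  proof (intro continuous_intros)
    show "continuous_on {0..1} p" using pc' by (rule continuous_on_subset) auto
    show "continuous_on {0..1} (\<lambda>x. f (p x))"
      by (rule continuous_on_compose2[OF fc]) (use pc' seg Ob(2) in \<open>auto simp: p_def intro: continuous_on_subset\<close>)
  qed
  have "h 0 \<le> h 1"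
  proof (rule dini_mono[OF _ hc])
    fix t e :: real assume t0: "0 \<le> t" and t1: "t < 1" and e: "e > 0"
    have ptO: "p t \<in> Ob" using seg t0 t1 by (simp add: p_def)
    have pt_tend: "(p \<longlongrightarrow> p t) (at_right t)" unfolding p_def by (intro tendsto_intros)
    have piece: "eventually (\<lambda>s. p s \<in> fst Pg \<longrightarrow> h s - h t \<ge> - e * (s - t)) (at_right t)"
      if Pg: "Pg \<in> F" for Pg
    proof (cases "p t \<in> fst Pg")
      case False
      have "open (- fst Pg)" using pc[OF Pg] by auto
      from topological_tendstoD[OF pt_tend this] False
      show ?thesis by (auto elim: eventually_mono)
    next
      case True
      define g where "g = snd Pg"
      define D where "D = DD Pg (p t)"
      have ptU: "p t \<in> UU Pg" using True pc[OF Pg] by auto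
      have gd: "(g has_derivative blinfun_apply D) (at (p t))" using pc[OF Pg] ptU by (auto simp: g_def D_def)
      have pd: "(p has_derivative (\<lambda>s. s *\<^sub>R w)) (at t)" unfolding p_def
        by (auto intro!: derivative_eq_intros)
      have "((\<lambda>s. g (p s)) has_derivative (\<lambda>s. blinfun_apply D (s *\<^sub>R w))) (at t)"
        by (rule has_derivative_compose[OF pd gd])
      then have "((\<lambda>s. g (p s) $ i) has_derivative (\<lambda>s. blinfun_apply D (s *\<^sub>R w) $ i)) (at t)"
        by (rule bounded_linear.has_derivative[OF bounded_linear_vec_nth])
      moreover have "(\<lambda>s. blinfun_apply D (s *\<^sub>R w) $ i) = (*) (blinfun_apply D w $ i)"
        by (auto simp: blinfun.scaleR_right)
      ultimately have gd': "((\<lambda>s. g (p s) $ i) has_real_derivative (blinfun_apply D w $ i)) (at t)"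
        by (simp add: has_field_derivative_def)
      have pd': "((\<lambda>s. \<beta> * p s $ i) has_real_derivative (\<beta> * w $ i)) (at t)"
        unfolding p_def by (auto intro!: derivative_eq_intros)
      define hP where "hP = (\<lambda>s. \<beta> * p s $ i + g (p s) $ i)"
      have "(hP has_real_derivative (\<beta> * w $ i + blinfun_apply D w $ i)) (at t)"
        unfolding hP_def by (rule DERIV_add[OF pd' gd'])
      then have "(hP has_real_derivative (\<beta> * w $ i + blinfun_apply D w $ i)) (at t within {t<..})"
        by (rule has_field_derivative_at_within)
      then have lim: "((\<lambda>y. (hP y - hP t) / (y - t)) \<longlongrightarrow> (\<beta> * w $ i + blinfun_apply D w $ i)) (at_right t)"
        unfolding has_field_derivative_iff .
      have nn: "\<beta> * w $ i + blinfun_apply D w $ i \<ge> 0"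
        unfolding D_def
        by (rule deriv_point[where U="UU Pg" and P="fst Pg" and g="snd Pg" and D="DD Pg" and f=f and Ob=Ob and Q=Q])
           (use pc[OF Pg] Ob good True ptO in auto)
      have "eventually (\<lambda>y. (hP y - hP t) / (y - t) > - e) (at_right t)"
        by (rule order_tendstoD(1)[OF lim]) (use nn e in linarith)
      then show ?thesis using eventually_at_right_less[of t]
      proof eventually_elim
        case (elim s)
        then have "hP s - hP t > - e * (s - t)" by (simp add: field_simps)
        moreover have "p s \<in> fst Pg \<Longrightarrow> h s = hP s" using pc[OF Pg] by (auto simp: h_def hP_def g_def)
        moreover have "h t = hP t" using pc[OF Pg] True by (auto simp: h_def hP_def g_def)
        ultimately show ?case by auto
      qed
    qed
    have all: "eventually (\<lambda>s. \<forall>Pg\<in>F. p s \<in> fst Pg \<longrightarrow> h s - h t \<ge> - e * (s - t)) (at_right t)"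
      using piece by (intro eventually_ball_finite[OF F] ballI)
    have lt1: "eventually (\<lambda>s. s < 1) (at_right t)"
      by (rule order_tendstoD(2)[OF tendsto_ident_at t1])
    show "eventually (\<lambda>s. h s - h t \<ge> - e * (s - t)) (at_right t)"
      using all lt1 eventually_at_right_less[of t]
    proof eventually_elim
      case (elim s)
      then have "p s \<in> Ob" using seg t0 by (simp add: p_def)
      then obtain Pg where "Pg \<in> F" "p s \<in> fst Pg" using cover Ob(2) by blast
      then show ?case using elim by blast
    qed
  qed simp
  then show ?thesis by (simp add: h_def p_def)
qed


lemma H_mono:
  fixes f :: "real^'n \<Rightarrow> real^'n" and k kp u v :: "real^'n"
  assumes kpos: "\<forall>j. k $ j > 0" and k_kp: "k \<le> kp"
    and fc: "continuous_on {0..kp} f" and fpw: "pw_C2_on {0..kp} f"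
    and coop: "cooperative_on {0..kp} {0..k} f"
    and bb: "\<exists>M<\<beta>. \<forall>u\<in>{0..kp}. \<forall>L. (f has_derivative L) (at u within {0..kp}) \<longrightarrow>
                     (\<forall>i j. \<bar>L (axis i 1) $ j\<bar> \<le> M)"
    and u: "u \<in> {0..k}" and v: "v \<in> {0..k}" and uv: "u \<le> v"
  shows "Hfun \<beta> f u i \<le> Hfun \<beta> f v i"
proof -
  obtain M where M: "M < \<beta>" and Mb: "\<And>y L j. y \<in> {0..kp} \<Longrightarrow> (f has_derivative L) (at y within {0..kp}) \<Longrightarrow> \<bar>L (axis j 1) $ j\<bar> \<le> M"
    using bb by blast
  obtain F where F: "finite F" and cov: "{0..kp} = \<Union>(fst ` F)"
    and Fp: "\<forall>(P, g)\<in>F. closed P \<and> closure (interior P) = P \<and>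
            (\<exists>U. open U \<and> P \<subseteq> U \<and> C2_on U g \<and> (\<forall>x\<in>P. f x = g x))"
    using fpw unfolding pw_C2_on_def by blast
  have "\<forall>Pg\<in>F. \<exists>UD. open (fst UD) \<and> fst Pg \<subseteq> fst UD \<and> closed (fst Pg) \<and>
        closure (interior (fst Pg)) = fst Pg \<and>
        (\<forall>y\<in>fst UD. (snd Pg has_derivative blinfun_apply (snd UD y)) (at y)) \<and>
        continuous_on (fst UD) (snd UD) \<and> (\<forall>x\<in>fst Pg. f x = snd Pg x)"
  proof
    fix Pg assume "Pg \<in> F"
    then obtain U where U: "open U" "fst Pg \<subseteq> U" "C2_on U (snd Pg)" "closed (fst Pg)"
        "closure (interior (fst Pg)) = fst Pg" "\<forall>x\<in>fst Pg. f x = snd Pg x"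
      using Fp by (cases Pg) auto
    from U(3) obtain g1 :: "real^'n \<Rightarrow> ((real^'n) \<Rightarrow>\<^sub>L (real^'n))"
        and g2 :: "real^'n \<Rightarrow> ((real^'n) \<Rightarrow>\<^sub>L ((real^'n) \<Rightarrow>\<^sub>L (real^'n)))"
      where g1: "\<forall>x\<in>U. (snd Pg has_derivative blinfun_apply (g1 x)) (at x)"
        and g2: "\<forall>x\<in>U. (g1 has_derivative blinfun_apply (g2 x)) (at x)"
      unfolding C2_on_def by blast
    have "continuous_on U g1"
      by (intro continuous_at_imp_continuous_on ballI has_derivative_continuous) (use g2 in blast)
    then show "\<exists>UD. open (fst UD) \<and> fst Pg \<subseteq> fst UD \<and> closed (fst Pg) \<and>
        closure (interior (fst Pg)) = fst Pg \<and>
        (\<forall>y\<in>fst UD. (snd Pg has_derivative blinfun_apply (snd UD y)) (at y)) \<and>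
        continuous_on (fst UD) (snd UD) \<and> (\<forall>x\<in>fst Pg. f x = snd Pg x)"
      using U g1 by (intro exI[of _ "(U, g1)"]) auto
  qed
  then obtain UD where UD: "\<And>Pg. Pg \<in> F \<Longrightarrow> open (fst (UD Pg)) \<and> fst Pg \<subseteq> fst (UD Pg) \<and> closed (fst Pg) \<and>
        closure (interior (fst Pg)) = fst Pg \<and>
        (\<forall>y\<in>fst (UD Pg). (snd Pg has_derivative blinfun_apply (snd (UD Pg) y)) (at y)) \<and>
        continuous_on (fst (UD Pg)) (snd (UD Pg)) \<and> (\<forall>x\<in>fst Pg. f x = snd Pg x)"
    by metis
  define c0 where "c0 = (1/2::real) *\<^sub>R k"
  define Ob where "Ob = box (0::real^'n) k"
  have ObQ: "Ob \<subseteq> {0..kp}"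
  proof
    fix x assume "x \<in> Ob"
    then have "\<forall>j. 0 < x $ j \<and> x $ j < k $ j" by (simp add: Ob_def mem_box_cart)
    then show "x \<in> {0..kp}" using k_kp unfolding less_eq_vec_def atLeastAtMost_iff by (smt (verit) zero_index)
  qed
  have ObK: "Ob \<subseteq> {0..k}"
    by (auto simp: Ob_def mem_box_cart less_eq_vec_def) (meson less_imp_le)+
  have uv': "\<forall>j. 0 \<le> u $ j \<and> u $ j \<le> v $ j \<and> v $ j \<le> k $ j"
    using u v uv by (auto simp: less_eq_vec_def)
  have step: "Hfun \<beta> f ((1 - \<epsilon>) *\<^sub>R u + \<epsilon> *\<^sub>R c0) i \<le> Hfun \<beta> f ((1 - \<epsilon>) *\<^sub>R v + \<epsilon> *\<^sub>R c0) i"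
    if e: "0 < \<epsilon>" "\<epsilon> < 1" for \<epsilon> :: real
  proof -
    define a where "a = (1 - \<epsilon>) *\<^sub>R u + \<epsilon> *\<^sub>R c0"
    define w where "w = (1 - \<epsilon>) *\<^sub>R (v - u)"
    have w0: "0 \<le> w" using uv' e by (auto simp: w_def less_eq_vec_def)
    have av: "a + w = (1 - \<epsilon>) *\<^sub>R v + \<epsilon> *\<^sub>R c0" by (simp add: a_def w_def algebra_simps)
    have seg: "a + t *\<^sub>R w \<in> Ob" if t: "t \<in> {0..1}" for t
    proof -
      have "0 < (a + t *\<^sub>R w) $ j \<and> (a + t *\<^sub>R w) $ j < k $ j" for j
      proof -
        have z: "0 \<le> u $ j + t * (v $ j - u $ j)" "u $ j + t * (v $ j - u $ j) \<le> k $ j"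
        proof -
          have "t * (v $ j - u $ j) \<ge> 0" using t spec[OF uv', of j] by auto
          then show "0 \<le> u $ j + t * (v $ j - u $ j)" using spec[OF uv', of j] by linarith
          have "t * (v $ j - u $ j) \<le> 1 * (v $ j - u $ j)" using t spec[OF uv', of j] by (intro mult_right_mono) auto
          then show "u $ j + t * (v $ j - u $ j) \<le> k $ j" using spec[OF uv', of j] by (simp only: mult_1) linarith
        qed
        have eq: "(a + t *\<^sub>R w) $ j = (1 - \<epsilon>) * (u $ j + t * (v $ j - u $ j)) + \<epsilon> * (k $ j / 2)"
          by (simp add: a_def w_def c0_def algebra_simps)
        have kj: "k $ j > 0" using kpos by auto
        have "(1 - \<epsilon>) * (u $ j + t * (v $ j - u $ j)) \<ge> 0" using z e by auto
        moreover have "(1 - \<epsilon>) * (u $ j + t * (v $ j - u $ j)) \<le> (1 - \<epsilon>) * k $ j"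
          using z e by (intro mult_left_mono) auto
        moreover have p: "\<epsilon> * (k $ j / 2) > 0" using e kj by simp
        moreover have "(1 - \<epsilon>) * k $ j + \<epsilon> * (k $ j / 2) = k $ j - \<epsilon> * (k $ j / 2)"
          by (simp add: algebra_simps)
        ultimately show ?thesis unfolding eq by linarith
      qed
      then show ?thesis by (simp add: Ob_def mem_box_cart)
    qed
    have good: "\<beta> * w$i + L w $ i \<ge> 0" if y: "y \<in> Ob" and L: "(f has_derivative L) (at y within {0..kp})" for y L
    proof (rule good_pt[OF has_derivative_linear[OF L] _ _ M w0])
      show "0 \<le> L (axis j 1) $ i" if "j \<noteq> i" for j
        using coop y ObK L that unfolding cooperative_on_def by blast
      show "\<bar>L (axis i 1) $ i\<bar> \<le> M" using Mb[OF _ L] y ObQ by blast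
    qed
    have "\<beta> * a$i + f a $ i \<le> \<beta> * (a + w)$i + f (a + w) $ i"
      apply (rule seg_mono[where F=F and Q="{0..kp}" and UU="\<lambda>Pg. fst (UD Pg)" and DD="\<lambda>Pg. snd (UD Pg)"
            and Ob=Ob and f=f and \<beta>=\<beta> and w=w and i=i and a=a])
      apply (rule F)
      using cov apply simp
      apply (erule UD)
      apply (rule fc)
      apply (unfold Ob_def, rule open_box, fold Ob_def)
      apply (rule ObQ)
      apply (erule (1) good)
      apply (erule seg)
      done
    then show ?thesis unfolding av by (simp add: Hfun_def a_def)
  qed
  define \<phi> where "\<phi> = (\<lambda>\<epsilon>::real. Hfun \<beta> f ((1 - \<epsilon>) *\<^sub>R v + \<epsilon> *\<^sub>R c0) i - Hfun \<beta> f ((1 - \<epsilon>) *\<^sub>R u + \<epsilon> *\<^sub>R c0) i)"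
  have inQ: "(1 - \<epsilon>) *\<^sub>R x + \<epsilon> *\<^sub>R c0 \<in> {0..kp}" if "x \<in> {0..k}" "0 \<le> \<epsilon>" "\<epsilon> \<le> 1" for x \<epsilon>
  proof -
    have "(1 - \<epsilon>) *\<^sub>R x + \<epsilon> *\<^sub>R c0 \<in> {0..k}"
    proof -
      have "0 \<le> ((1 - \<epsilon>) *\<^sub>R x + \<epsilon> *\<^sub>R c0) $ j \<and> ((1 - \<epsilon>) *\<^sub>R x + \<epsilon> *\<^sub>R c0) $ j \<le> k $ j" for j
      proof -
        have xj: "0 \<le> x $ j" "x $ j \<le> k $ j" using that by (auto simp: less_eq_vec_def)
        have kj: "k $ j > 0" using kpos by auto
        have "(1 - \<epsilon>) * x $ j \<le> (1 - \<epsilon>) * k $ j" using xj that by (intro mult_left_mono) auto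
        moreover have "\<epsilon> * x $ j \<le> x $ j" using xj that by (simp add: mult_left_le_one_le)
        moreover have "\<epsilon> * k $ j \<ge> 0" using kj that by simp
        moreover have "((1 - \<epsilon>) *\<^sub>R x + \<epsilon> *\<^sub>R c0) $ j = x $ j - \<epsilon> * x $ j + (\<epsilon> * k $ j) / 2"
          by (simp add: c0_def algebra_simps)
        moreover have "(1 - \<epsilon>) * x $ j = x $ j - \<epsilon> * x $ j" "(1 - \<epsilon>) * k $ j = k $ j - \<epsilon> * k $ j"
          by (simp_all add: algebra_simps)
        ultimately show ?thesis using xj kj that by linarith
      qed
      then show ?thesis by (simp add: less_eq_vec_def)
    qed
    then show ?thesis using k_kp by (auto simp: less_eq_vec_def intro: order_trans)
  qed
  have Hc: "((\<lambda>\<epsilon>. Hfun \<beta> f ((1 - \<epsilon>) *\<^sub>R x + \<epsilon> *\<^sub>R c0) i) \<longlongrightarrow> Hfun \<beta> f x i) (at_right 0)"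
    if x: "x \<in> {0..k}" for x
  proof -
    have pt: "((\<lambda>\<epsilon>::real. (1 - \<epsilon>) *\<^sub>R x + \<epsilon> *\<^sub>R c0) \<longlongrightarrow> x) (at_right 0)"
    proof -
      have "((\<lambda>\<epsilon>::real. (1 - \<epsilon>) *\<^sub>R x + \<epsilon> *\<^sub>R c0) \<longlongrightarrow> (1 - 0) *\<^sub>R x + 0 *\<^sub>R c0) (at_right 0)"
        by (intro tendsto_intros)
      then show ?thesis by simp
    qed
    have ev: "eventually (\<lambda>\<epsilon>::real. (1 - \<epsilon>) *\<^sub>R x + \<epsilon> *\<^sub>R c0 \<in> {0..kp}) (at_right 0)"
    proof -
      have "eventually (\<lambda>\<epsilon>::real. \<epsilon> < 1) (at_right 0)"
        by (rule order_tendstoD(2)[OF tendsto_ident_at]) simp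
      then show ?thesis using eventually_at_right_less[of "0::real"]
        by eventually_elim (use inQ x in auto)
    qed
    have xQ: "x \<in> {0..kp}" using x k_kp by (auto simp: less_eq_vec_def intro: order_trans)
    have "((\<lambda>\<epsilon>. f ((1 - \<epsilon>) *\<^sub>R x + \<epsilon> *\<^sub>R c0)) \<longlongrightarrow> f x) (at_right 0)"
      by (rule continuous_on_tendsto_compose[OF fc pt xQ ev])
    then show ?thesis unfolding Hfun_def by (intro tendsto_intros pt)
  qed
  have "(\<phi> \<longlongrightarrow> Hfun \<beta> f v i - Hfun \<beta> f u i) (at_right 0)"
    unfolding \<phi>_def by (intro tendsto_diff Hc u v)
  moreover have "eventually (\<lambda>\<epsilon>. 0 \<le> \<phi> \<epsilon>) (at_right 0)"
  proof -
    have "eventually (\<lambda>\<epsilon>::real. \<epsilon> < 1) (at_right 0)"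
      by (rule order_tendstoD(2)[OF tendsto_ident_at]) simp
    then show ?thesis using eventually_at_right_less[of "0::real"]
      by eventually_elim (use step in \<open>auto simp: \<phi>_def\<close>)
  qed
  ultimately have "0 \<le> Hfun \<beta> f v i - Hfun \<beta> f u i"
    by (rule tendsto_lowerbound) simp
  then show ?thesis by simp
qed

lemma psi_int:
  fixes E :: "real \<Rightarrow> real"
  assumes a: "a > 0" and E: "continuous_on UNIV E" and B: "\<And>x. \<bar>E x\<bar> \<le> B"
  shows "(\<lambda>\<tau>. exp (-a*\<tau>) * E \<tau>) absolutely_integrable_on {0..}"
proof -
  have g: "(\<lambda>\<tau>. B * exp (-a*\<tau>)) integrable_on {0..}"
    using integrable_on_cmult_left[OF integrable_on_exp_minus_to_infinity[OF a, of 0], of B] by simp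
  have le: "norm (exp (-a*\<tau>) * E \<tau>) \<le> B * exp (-a*\<tau>)" for \<tau>
    using B[of \<tau>] by (simp add: abs_mult mult.commute mult_right_mono)
  have m: "(\<lambda>\<tau>. exp (-a*\<tau>) * E \<tau>) \<in> borel_measurable (lebesgue_on {0..})"
    by (intro continuous_imp_measurable_on_sets_lebesgue continuous_intros
        continuous_on_subset[OF E]) auto
  have i: "(\<lambda>\<tau>. exp (-a*\<tau>) * E \<tau>) integrable_on {0..}"
    by (rule measurable_bounded_by_integrable_imp_integrable[OF m g]) (use le in auto)
  show ?thesis
    by (rule absolutely_integrable_integrable_bound[OF _ i g]) (use le in auto)
qed

lemma transL:
  fixes G :: "real \<Rightarrow> real"
  assumes a: "a > 0" and G: "continuous_on UNIV G" and B: "\<And>x. \<bar>G x\<bar> \<le> B"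
  shows "integral {..\<xi>} (\<lambda>s. exp (-a*(\<xi>-s)) * G s) = integral {0..} (\<lambda>\<tau>. exp (-a*\<tau>) * G (\<xi>-\<tau>))"
proof -
  have E: "continuous_on UNIV (\<lambda>\<tau>. G (\<xi>-\<tau>))"
    by (intro continuous_on_compose2[OF G] continuous_intros) auto
  have ai: "(\<lambda>\<tau>. exp (-a*\<tau>) * G (\<xi>-\<tau>)) absolutely_integrable_on {0..}"
    by (rule psi_int[OF a E]) (use B in auto)
  have der: "((\<lambda>\<tau>. \<xi> - \<tau>) has_field_derivative (-1)) (at x within {0..})" for x
    by (auto intro!: derivative_eq_intros)
  have img: "(\<lambda>\<tau>. \<xi> - \<tau>) ` {0..} = {..\<xi>}"
    by (auto simp: image_iff intro!: bexI[where x="\<xi> - _"])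
  have "(\<lambda>x. \<bar>-1::real\<bar> * (exp (-a*(\<xi>-(\<xi>-x))) * G (\<xi>-x))) absolutely_integrable_on {0..} \<and>
        integral {0..} (\<lambda>x. \<bar>-1::real\<bar> * (exp (-a*(\<xi>-(\<xi>-x))) * G (\<xi>-x))) = integral {0..} (\<lambda>\<tau>. exp (-a*\<tau>) * G (\<xi>-\<tau>))"
    using ai by simp
  from has_absolute_integral_change_of_variables_1'[where g="\<lambda>\<tau>. \<xi> - \<tau>" and g'="\<lambda>_. -1"
      and f="\<lambda>s. exp (-a*(\<xi>-s)) * G s" and S="{0..}", OF _ der _, THEN iffD1, OF _ _ this]
  show ?thesis by (simp add: img inj_on_def)
qed

lemma transR:
  fixes G :: "real \<Rightarrow> real"
  assumes a: "a > 0" and G: "continuous_on UNIV G" and B: "\<And>x. \<bar>G x\<bar> \<le> B"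
  shows "integral {\<xi>..} (\<lambda>s. exp (a*(\<xi>-s)) * G s) = integral {0..} (\<lambda>\<tau>. exp (-a*\<tau>) * G (\<xi>+\<tau>))"
proof -
  have E: "continuous_on UNIV (\<lambda>\<tau>. G (\<xi>+\<tau>))"
    by (intro continuous_on_compose2[OF G] continuous_intros) auto
  have ai: "(\<lambda>\<tau>. exp (-a*\<tau>) * G (\<xi>+\<tau>)) absolutely_integrable_on {0..}"
    by (rule psi_int[OF a E]) (use B in auto)
  have der: "((\<lambda>\<tau>. \<xi> + \<tau>) has_field_derivative 1) (at x within {0..})" for x
    by (auto intro!: derivative_eq_intros)
  have img: "(\<lambda>\<tau>. \<xi> + \<tau>) ` {0..} = {\<xi>..}"
    by (auto simp: image_iff intro!: bexI[where x="_ - \<xi>"])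
  have "(\<lambda>x. \<bar>1::real\<bar> * (exp (a*(\<xi>-(\<xi>+x))) * G (\<xi>+x))) absolutely_integrable_on {0..} \<and>
        integral {0..} (\<lambda>x. \<bar>1::real\<bar> * (exp (a*(\<xi>-(\<xi>+x))) * G (\<xi>+x))) = integral {0..} (\<lambda>\<tau>. exp (-a*\<tau>) * G (\<xi>+\<tau>))"
    using ai by simp
  from has_absolute_integral_change_of_variables_1'[where g="\<lambda>\<tau>. \<xi> + \<tau>" and g'="\<lambda>_. 1"
      and f="\<lambda>s. exp (a*(\<xi>-s)) * G s" and S="{0..}", OF _ der _, THEN iffD1, OF _ _ this]
  show ?thesis by (simp add: img inj_on_def)
qed

lemma psi_int':
  fixes E :: "real \<Rightarrow> real"
  assumes a: "a > 0" and E: "continuous_on UNIV E" and B: "\<And>x. \<bar>E x\<bar> \<le> B"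
  shows "(\<lambda>\<tau>. exp (-a*\<tau>) * E \<tau>) integrable_on {0..}"
  using psi_int[OF assms] unfolding absolutely_integrable_on_def by blast

lemma psi_mono:
  fixes E E' :: "real \<Rightarrow> real"
  assumes a: "a > 0" and E: "continuous_on UNIV E" and B: "\<And>x. \<bar>E x\<bar> \<le> B"
    and E': "continuous_on UNIV E'" and B': "\<And>x. \<bar>E' x\<bar> \<le> B'"
    and le: "\<And>x. x \<ge> 0 \<Longrightarrow> E x \<le> E' x"
  shows "integral {0..} (\<lambda>\<tau>. exp (-a*\<tau>) * E \<tau>) \<le> integral {0..} (\<lambda>\<tau>. exp (-a*\<tau>) * E' \<tau>)"
  by (rule integral_le[OF psi_int'[OF a E B] psi_int'[OF a E' B']]) (use le in auto)

lemma psi_cont: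
  fixes G :: "real \<Rightarrow> real"
  assumes a: "a > 0" and G: "continuous_on UNIV G" and B: "\<And>x. \<bar>G x\<bar> \<le> B"
    and sg: "\<sigma> = 1 \<or> \<sigma> = -1"
  shows "continuous_on UNIV (\<lambda>\<xi>. integral {0..} (\<lambda>\<tau>. exp (-a*\<tau>) * G (\<xi> + \<sigma>*\<tau>)))"
proof -
  have Ec: "continuous_on UNIV (\<lambda>\<tau>. G (\<xi> + \<sigma>*\<tau>))" for \<xi>
    by (intro continuous_on_compose2[OF G] continuous_intros) auto
  have g: "(\<lambda>\<tau>. B * exp (-a*\<tau>)) integrable_on {0..}"
    using integrable_on_cmult_left[OF integrable_on_exp_minus_to_infinity[OF a, of 0], of B] by simp
  show ?thesis unfolding continuous_on_eq_continuous_at[OF open_UNIV]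
  proof (intro ballI continuous_at_sequentiallyI)
    fix x0 and x :: "nat \<Rightarrow> real" assume x: "x \<longlonglongrightarrow> x0"
    have "(\<lambda>k. integral {0..} (\<lambda>\<tau>. exp (-a*\<tau>) * G (x k + \<sigma>*\<tau>))) \<longlonglongrightarrow>
          integral {0..} (\<lambda>\<tau>. exp (-a*\<tau>) * G (x0 + \<sigma>*\<tau>))"
    proof (rule dominated_convergence(2)[OF _ g])
      show "(\<lambda>\<tau>. exp (-a*\<tau>) * G (x k + \<sigma>*\<tau>)) integrable_on {0..}" for k
        by (rule psi_int'[OF a Ec]) (use B in auto)
      show "norm (exp (-a*\<tau>) * G (x k + \<sigma>*\<tau>)) \<le> B * exp (-a*\<tau>)" for k \<tau>
        using B[of "x k + \<sigma>*\<tau>"] by (simp add: abs_mult mult.commute mult_right_mono)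
      show "(\<lambda>k. exp (-a*\<tau>) * G (x k + \<sigma>*\<tau>)) \<longlonglongrightarrow> exp (-a*\<tau>) * G (x0 + \<sigma>*\<tau>)" for \<tau>
      proof -
        have "(\<lambda>k. x k + \<sigma>*\<tau>) \<longlonglongrightarrow> x0 + \<sigma>*\<tau>" by (intro tendsto_intros x)
        moreover have "isCont G (x0 + \<sigma>*\<tau>)" using G by (simp add: continuous_on_eq_continuous_at)
        ultimately have "(\<lambda>k. G (x k + \<sigma>*\<tau>)) \<longlonglongrightarrow> G (x0 + \<sigma>*\<tau>)"
          using isCont_tendsto_compose by blast
        then show ?thesis by (intro tendsto_intros)
      qed
    qed
    then show "(\<lambda>n. integral {0..} (\<lambda>\<tau>. exp (-a*\<tau>) * G (x n + \<sigma>*\<tau>))) \<longlonglongrightarrow>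
          integral {0..} (\<lambda>\<tau>. exp (-a*\<tau>) * G (x0 + \<sigma>*\<tau>))" .
  qed
qed



theorem lemma4p5:
  fixes d :: "real^'n" and f fp fm :: "real^'n \<Rightarrow> real^'n"
    and k kp km :: "real^'n" and J :: "real^'n^'n"
    and blk :: "'n \<Rightarrow> nat" and m :: nat and \<nu> :: "real \<Rightarrow> real^'n"
    and c \<Lambda> \<beta> \<gamma> q \<rho> :: real
  assumes d_pos: "\<forall>i. d $ i > 0"
    \<comment> \<open>(H1)\<close>
    and kp_pos: "pos_vec kp"
    and f_cont: "continuous_on {0..kp} f" and f_pw: "pw_C2_on {0..kp} f"
    and f_glob: "pde_global_solvable d f kp"
    and km_pos: "pos_vec km" and km_k: "km \<le> k" and k_kp: "k \<le> kp"
    and fp_cont: "continuous_on {0..kp} fp" and fp_pw: "pw_C2_on {0..kp} fp"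
    and fm_cont: "continuous_on {0..km} fm" and fm_pw: "pw_C2_on {0..km} fm"
    and fm_le_f: "\<forall>u\<in>{0..km}. fm u \<le> f u"
    and f_le_fp: "\<forall>u\<in>{0..kp}. f u \<le> fp u"
    and f_0: "f 0 = 0" and f_k: "f k = 0"
    and fp_0: "fp 0 = 0" and fp_kp: "fp kp = 0"
    and fm_0: "fm 0 = 0" and fm_km: "fm km = 0"
    and f_eq: "\<forall>u\<in>{0..k}. pos_vec u \<and> f u = 0 \<longrightarrow> u = k"
    and fp_eq: "\<forall>u\<in>{0..kp}. pos_vec u \<and> fp u = 0 \<longrightarrow> u = kp"
    and fm_eq: "\<forall>u\<in>{0..km}. pos_vec u \<and> fm u = 0 \<longrightarrow> u = km"
    and fp_coop: "cooperative_on {0..kp} {0..kp} fp"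
    and fm_coop: "cooperative_on {0..km} {0..km} fm"
    and f_J: "(f has_derivative (\<lambda>h. J *v h)) (at 0 within {0..kp})"
    and fp_J: "(fp has_derivative (\<lambda>h. J *v h)) (at 0 within {0..kp})"
    and fm_J: "(fm has_derivative (\<lambda>h. J *v h)) (at 0 within {0..km})"
    and coop_case: "cooperative_on {0..kp} {0..kp} f \<longrightarrow>
                      (\<forall>u\<in>{0..kp}. fp u = f u) \<and> (\<forall>u\<in>{0..km}. fm u = f u) \<and> kp = k \<and> km = k"
    \<comment> \<open>(H2)\<close>
    and blk_range: "blk ` UNIV = {..<m}"
    and lower_tri: "\<forall>lam>0. \<forall>i j. blk i < blk j \<longrightarrow> Amat d J lam $ i $ j = 0"
    and irred: "\<forall>lam>0. \<forall>p<m. card {i. blk i = p} \<ge> 2 \<longrightarrow>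
                  (\<forall>i j. blk i = p \<and> blk j = p \<longrightarrow>
                     (i, j) \<in> {(a, b). blk a = p \<and> blk b = p \<and> a \<noteq> b \<and> Amat d J lam $ a $ b \<noteq> 0}\<^sup>+)"
    and first_block: "\<forall>lam>0. Psi_on {i. blk i = 0} (Amat d J lam) = Psi (Amat d J lam) \<and>
                         Psi (Amat d J lam) > 0 \<and>
                         (\<forall>p. 0 < p \<and> p < m \<longrightarrow> Psi_on {i. blk i = p} (Amat d J lam) < Psi (Amat d J lam))"
    and nu_pos: "\<forall>lam>0. pos_vec (\<nu> lam)"
    and nu_eig: "\<forall>lam>0. Amat d J lam *v \<nu> lam = Psi (Amat d J lam) *\<^sub>R \<nu> lam"
    and nu_cont: "continuous_on {0<..} \<nu>"
    \<comment> \<open>(H3)\<close>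
    and H3p: "\<forall>\<alpha>>0. \<forall>lam>0. \<alpha> *\<^sub>R \<nu> lam \<in> {0..kp} \<longrightarrow> fp (\<alpha> *\<^sub>R \<nu> lam) \<le> \<alpha> *\<^sub>R (J *v \<nu> lam)"
    and H3m: "\<forall>\<alpha>>0. \<forall>lam>0. \<alpha> *\<^sub>R \<nu> lam \<in> {0..km} \<longrightarrow> fm (\<alpha> *\<^sub>R \<nu> lam) \<le> \<alpha> *\<^sub>R (J *v \<nu> lam)"
    \<comment> \<open>setup: speed c and \<Lambda>_c\<close>
    and c_gt: "c > cstar d J"
    and Lam_pos: "\<Lambda> > 0" and Lam_sol: "Phi d J \<Lambda> = c"
    and Lam_min: "\<forall>lam. 0 < lam \<and> lam < \<Lambda> \<longrightarrow> Phi d J lam \<noteq> c"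
    \<comment> \<open>the constant \<beta>\<close>
    and beta_bd: "\<exists>M<\<beta>. \<forall>u\<in>{0..kp}. \<forall>L. (f has_derivative L) (at u within {0..kp}) \<longrightarrow>
                     (\<forall>i j. \<bar>L (axis i 1) $ j\<bar> \<le> M)"
    and lam_order: "\<forall>i. lam2 d c \<beta> i > lam1 d c \<beta> i \<and> lam1 d c \<beta> i > 2 * \<Lambda>"
    \<comment> \<open>upper and lower solutions\<close>
    and gamma: "1 < \<gamma>" "\<gamma> < 2" "Phi d J (\<gamma> * \<Lambda>) < c"
    and gamma_pos: "\<forall>i. \<beta> * \<nu> (\<gamma> * \<Lambda>) $ i - \<nu> (\<gamma> * \<Lambda>) $ i * d $ i * (\<gamma> * \<Lambda>)\<^sup>2
                       + (\<Sum>j\<in>UNIV. \<nu> (\<gamma> * \<Lambda>) $ j * Amat d J (\<gamma> * \<Lambda>) $ i $ j) > 0"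
    and q_gt: "q > 1"
    and phi_lt: "\<forall>\<xi> i. phi_minus \<nu> \<Lambda> \<gamma> q \<xi> $ i < phi_plus k \<nu> \<Lambda> \<xi> $ i"
    and lower_sol: "\<forall>\<xi> i. Top d c \<beta> f (phi_minus \<nu> \<Lambda> \<gamma> q) \<xi> $ i \<ge> phi_minus \<nu> \<Lambda> \<gamma> q \<xi> $ i"
    and upper_sol: "\<forall>\<xi> i. Top d c \<beta> f (phi_plus k \<nu> \<Lambda>) \<xi> $ i \<le> phi_plus k \<nu> \<Lambda> \<xi> $ i"
    \<comment> \<open>the weight\<close>
    and rho: "0 < \<rho>" "\<rho> < \<Lambda>"
    \<comment> \<open>hypothesis of the lemma: f quasi-monotone on [0,k]\<close>
    and f_coop_k: "cooperative_on {0..kp} {0..k} f"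
  shows "(\<forall>u v. u \<in> Aset \<rho> (phi_minus \<nu> \<Lambda> \<gamma> q) (phi_plus k \<nu> \<Lambda>) \<longrightarrow>
                v \<in> Aset \<rho> (phi_minus \<nu> \<Lambda> \<gamma> q) (phi_plus k \<nu> \<Lambda>) \<longrightarrow>
                (\<forall>\<xi>. u \<xi> \<le> v \<xi>) \<longrightarrow> (\<forall>\<xi>. Top d c \<beta> f u \<xi> \<le> Top d c \<beta> f v \<xi>))
       \<and> (\<forall>u \<in> Aset \<rho> (phi_minus \<nu> \<Lambda> \<gamma> q) (phi_plus k \<nu> \<Lambda>).
                Top d c \<beta> f u \<in> Aset \<rho> (phi_minus \<nu> \<Lambda> \<gamma> q) (phi_plus k \<nu> \<Lambda>))
       \<and> (\<forall>u \<in> Aset \<rho> (phi_minus \<nu> \<Lambda> \<gamma> q) (phi_plus k \<nu> \<Lambda>).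
                (\<forall>i. mono (\<lambda>\<xi>. u \<xi> $ i)) \<longrightarrow> (\<forall>i. mono (\<lambda>\<xi>. Top d c \<beta> f u \<xi> $ i)))"
proof -
  let ?A = "Aset \<rho> (phi_minus \<nu> \<Lambda> \<gamma> q) (phi_plus k \<nu> \<Lambda>)"
  let ?T = "Top d c \<beta> f"
  define l1 where "l1 = lam1 d c \<beta>"
  define l2 where "l2 = lam2 d c \<beta>"
  define C where "C = (\<lambda>i. 1 / (d $ i * (l1 i + l2 i)))"
  have kpos: "\<forall>j. k $ j > 0" using km_pos km_k
    by (auto simp: pos_vec_def less_eq_vec_def intro: less_le_trans)
  have l1p: "l1 i > 0" for i using lam_order Lam_pos unfolding l1_def by (smt (verit))
  have l2p: "l2 i > 0" for i using lam_order Lam_pos unfolding l2_def by (smt (verit))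
  have Cp: "C i > 0" for i using d_pos l1p[of i] l2p[of i] by (simp add: C_def)
  note Hm = H_mono[OF kpos k_kp f_cont f_pw f_coop_k beta_bd]
  define Box where "Box = (\<lambda>u::real \<Rightarrow> real^'n. continuous_on UNIV u \<and> (\<forall>s. u s \<in> {0..k}))"
  have kQ: "x \<in> {0..kp}" if "x \<in> {0..k}" for x
    using that k_kp by (auto intro: order_trans)
  have Gc: "continuous_on UNIV (\<lambda>s. Hfun \<beta> f (u s) i)" if "Box u" for u i
  proof -
    have uc: "continuous_on UNIV u" and ub: "\<And>s. u s \<in> {0..kp}" using that kQ by (auto simp: Box_def)
    have "continuous_on UNIV (\<lambda>s. f (u s))"
      by (rule continuous_on_compose2[OF f_cont uc]) (use ub in auto)
    then show ?thesis unfolding Hfun_def by (intro continuous_intros uc)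
  qed
  have Gb: "\<bar>Hfun \<beta> f (u s) i\<bar> \<le> \<beta> * k $ i" if "Box u" for u i s
  proof -
    have us: "u s \<in> {0..k}" using that by (auto simp: Box_def)
    have "Hfun \<beta> f 0 i \<le> Hfun \<beta> f (u s) i" by (rule Hm) (use us in auto)
    moreover have "Hfun \<beta> f (u s) i \<le> Hfun \<beta> f k i" by (rule Hm) (use us kpos in \<open>auto simp: less_eq_vec_def less_imp_le\<close>)
    ultimately show ?thesis by (simp add: Hfun_def f_0 f_k)
  qed
  have Tf: "?T u \<xi> $ i = C i * (integral {0..} (\<lambda>\<tau>. exp (- l1 i * \<tau>) * Hfun \<beta> f (u (\<xi> + -1 * \<tau>)) i)
      + integral {0..} (\<lambda>\<tau>. exp (- l2 i * \<tau>) * Hfun \<beta> f (u (\<xi> + 1 * \<tau>)) i))" if "Box u" for u \<xi> i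
    using transL[OF l1p Gc[OF that] Gb[OF that], of \<xi>] transR[OF l2p Gc[OF that] Gb[OF that], of \<xi>]
    by (simp add: Top_def C_def l1_def l2_def)
  have Eshift: "continuous_on UNIV (\<lambda>\<tau>. Hfun \<beta> f (u (\<xi> + \<sigma> * \<tau>)) i)" if "Box u" for u \<xi> \<sigma> i
    by (rule continuous_on_compose2[OF Gc[OF that]]) (auto intro!: continuous_intros)
  have TM: "?T u \<xi> $ i \<le> ?T v \<xi>' $ i"
    if u: "Box u" and v: "Box v" and uv: "\<And>\<tau>. \<tau> \<ge> 0 \<Longrightarrow> u (\<xi> + \<sigma> * \<tau>) \<le> v (\<xi>' + \<sigma> * \<tau>)"
      and sg: "\<sigma> = -1 \<or> \<sigma> = 1" and uv2: "\<And>\<tau>. \<tau> \<ge> 0 \<Longrightarrow> u (\<xi> + -\<sigma> * \<tau>) \<le> v (\<xi>' + -\<sigma> * \<tau>)"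
    for u v \<xi> \<xi>' i \<sigma>
  proof -
    have uin: "u s \<in> {0..k}" "v s \<in> {0..k}" for s using u v by (auto simp: Box_def)
    have a: "integral {0..} (\<lambda>\<tau>. exp (- l1 i * \<tau>) * Hfun \<beta> f (u (\<xi> + -1 * \<tau>)) i) \<le>
             integral {0..} (\<lambda>\<tau>. exp (- l1 i * \<tau>) * Hfun \<beta> f (v (\<xi>' + -1 * \<tau>)) i)"
    proof (rule psi_mono[OF l1p Eshift[OF u] _ Eshift[OF v]])
      show "\<bar>Hfun \<beta> f (u (\<xi> + -1 * \<tau>)) i\<bar> \<le> \<beta> * k $ i" for \<tau> by (rule Gb[OF u])
      show "\<bar>Hfun \<beta> f (v (\<xi>' + -1 * \<tau>)) i\<bar> \<le> \<beta> * k $ i" for \<tau> by (rule Gb[OF v])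
      show "Hfun \<beta> f (u (\<xi> + -1 * \<tau>)) i \<le> Hfun \<beta> f (v (\<xi>' + -1 * \<tau>)) i" if "0 \<le> \<tau>" for \<tau>
        by (rule Hm[OF uin]) (use uv uv2 sg that in auto)
    qed
    have b: "integral {0..} (\<lambda>\<tau>. exp (- l2 i * \<tau>) * Hfun \<beta> f (u (\<xi> + 1 * \<tau>)) i) \<le>
             integral {0..} (\<lambda>\<tau>. exp (- l2 i * \<tau>) * Hfun \<beta> f (v (\<xi>' + 1 * \<tau>)) i)"
    proof (rule psi_mono[OF l2p Eshift[OF u] _ Eshift[OF v]])
      show "\<bar>Hfun \<beta> f (u (\<xi> + 1 * \<tau>)) i\<bar> \<le> \<beta> * k $ i" for \<tau> by (rule Gb[OF u])
      show "\<bar>Hfun \<beta> f (v (\<xi>' + 1 * \<tau>)) i\<bar> \<le> \<beta> * k $ i" for \<tau> by (rule Gb[OF v])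
      show "Hfun \<beta> f (u (\<xi> + 1 * \<tau>)) i \<le> Hfun \<beta> f (v (\<xi>' + 1 * \<tau>)) i" if "0 \<le> \<tau>" for \<tau>
        by (rule Hm[OF uin]) (use uv uv2 sg that in auto)
    qed
    show ?thesis unfolding Tf[OF u] Tf[OF v] using a b Cp[of i] by (simp add: mult_left_mono)
  qed
  have TMono: "?T u \<xi> $ i \<le> ?T v \<xi> $ i" if "Box u" "Box v" "\<And>s. u s \<le> v s" for u v \<xi> i
    by (rule TM[OF that(1,2), where \<sigma>=1]) (use that(3) in auto)
  have Tc: "continuous_on UNIV (?T u)" if u: "Box u" for u
  proof -
    have eq: "?T u = (\<lambda>\<xi>. \<chi> i. C i * (integral {0..} (\<lambda>\<tau>. exp (- l1 i * \<tau>) * Hfun \<beta> f (u (\<xi> + -1 * \<tau>)) i)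
      + integral {0..} (\<lambda>\<tau>. exp (- l2 i * \<tau>) * Hfun \<beta> f (u (\<xi> + 1 * \<tau>)) i)))"
      by (rule ext) (simp add: vec_eq_iff Tf[OF u])
    show ?thesis unfolding eq
    proof (intro continuous_on_vec_lambda continuous_intros)
      fix i
      show "continuous_on UNIV (\<lambda>\<xi>. integral {0..} (\<lambda>\<tau>. exp (- l1 i * \<tau>) * Hfun \<beta> f (u (\<xi> + -1 * \<tau>)) i))"
        by (rule psi_cont[OF l1p Gc[OF u] Gb[OF u]]) simp
      show "continuous_on UNIV (\<lambda>\<xi>. integral {0..} (\<lambda>\<tau>. exp (- l2 i * \<tau>) * Hfun \<beta> f (u (\<xi> + 1 * \<tau>)) i))"
        by (rule psi_cont[OF l2p Gc[OF u] Gb[OF u]]) simp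
    qed
  qed
  have nu0: "\<nu> \<Lambda> $ i > 0" for i using nu_pos Lam_pos by (auto simp: pos_vec_def)
  have php_c: "continuous_on UNIV (phi_plus k \<nu> \<Lambda>)"
    unfolding phi_plus_def by (intro continuous_on_vec_lambda continuous_intros)
  have phm_c: "continuous_on UNIV (phi_minus \<nu> \<Lambda> \<gamma> q)"
    unfolding phi_minus_def by (intro continuous_on_vec_lambda continuous_intros)
  have php_k: "phi_plus k \<nu> \<Lambda> s \<le> k" for s by (simp add: phi_plus_def less_eq_vec_def)
  have phm_0: "0 \<le> phi_minus \<nu> \<Lambda> \<gamma> q s" for s by (simp add: phi_minus_def less_eq_vec_def)
  have phm_php: "phi_minus \<nu> \<Lambda> \<gamma> q s \<le> phi_plus k \<nu> \<Lambda> s" for s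
    using phi_lt by (simp add: less_eq_vec_def less_imp_le)
  have Bphp: "Box (phi_plus k \<nu> \<Lambda>)" unfolding Box_def
    using php_c php_k phm_0 phm_php by (auto intro: order_trans)
  have Bphm: "Box (phi_minus \<nu> \<Lambda> \<gamma> q)" unfolding Box_def
    using phm_c php_k phm_0 phm_php by (auto intro: order_trans)
  have BA: "Box u" if "u \<in> ?A" for u
  proof -
    have "\<forall>\<xi>. phi_minus \<nu> \<Lambda> \<gamma> q \<xi> \<le> u \<xi> \<and> u \<xi> \<le> phi_plus k \<nu> \<Lambda> \<xi>" "continuous_on UNIV u"
      using that unfolding Aset_def E_rho_def by auto
    then show ?thesis unfolding Box_def using phm_0 php_k by (meson atLeastAtMost_iff order_trans)
  qed
  have c1: "\<forall>u v. u \<in> ?A \<longrightarrow> v \<in> ?A \<longrightarrow> (\<forall>\<xi>. u \<xi> \<le> v \<xi>) \<longrightarrow> (\<forall>\<xi>. ?T u \<xi> \<le> ?T v \<xi>)"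
    using TMono BA by (auto simp: less_eq_vec_def)
  have c2: "\<forall>u \<in> ?A. ?T u \<in> ?A"
  proof
    fix u assume uA: "u \<in> ?A"
    have u: "Box u" using BA[OF uA] .
    have lo: "phi_minus \<nu> \<Lambda> \<gamma> q \<xi> \<le> ?T u \<xi>" for \<xi>
      unfolding less_eq_vec_def
    proof
      fix i
      have "phi_minus \<nu> \<Lambda> \<gamma> q \<xi> $ i \<le> ?T (phi_minus \<nu> \<Lambda> \<gamma> q) \<xi> $ i" using lower_sol by auto
      also have "\<dots> \<le> ?T u \<xi> $ i" by (rule TMono[OF Bphm u]) (use uA in \<open>auto simp: Aset_def\<close>)
      finally show "phi_minus \<nu> \<Lambda> \<gamma> q \<xi> $ i \<le> ?T u \<xi> $ i" .
    qed
    have hi: "?T u \<xi> \<le> phi_plus k \<nu> \<Lambda> \<xi>" for \<xi>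
      unfolding less_eq_vec_def
    proof
      fix i
      have "?T u \<xi> $ i \<le> ?T (phi_plus k \<nu> \<Lambda>) \<xi> $ i" by (rule TMono[OF u Bphp]) (use uA in \<open>auto simp: Aset_def\<close>)
      also have "\<dots> \<le> phi_plus k \<nu> \<Lambda> \<xi> $ i" using upper_sol by auto
      finally show "?T u \<xi> $ i \<le> phi_plus k \<nu> \<Lambda> \<xi> $ i" .
    qed
    have gr: "\<exists>B. \<forall>\<xi>. \<bar>?T u \<xi> $ i\<bar> * exp (- \<rho> * \<xi>) \<le> B" for i
    proof (intro exI allI)
      fix \<xi> :: real
      have t0: "0 \<le> ?T u \<xi> $ i" using lo[of \<xi>] phm_0[of \<xi>] by (auto simp: less_eq_vec_def intro: order_trans)
      have t1: "?T u \<xi> $ i \<le> min (k $ i) (\<nu> \<Lambda> $ i * exp (\<Lambda> * \<xi>))"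
        using hi[of \<xi>] by (simp add: less_eq_vec_def phi_plus_def)
      show "\<bar>?T u \<xi> $ i\<bar> * exp (- \<rho> * \<xi>) \<le> k $ i + \<nu> \<Lambda> $ i"
      proof (cases "\<xi> \<ge> 0")
        case True
        have "exp (- \<rho> * \<xi>) \<le> 1" using True rho by simp
        then have "\<bar>?T u \<xi> $ i\<bar> * exp (- \<rho> * \<xi>) \<le> \<bar>?T u \<xi> $ i\<bar> * 1"
          by (intro mult_left_mono) auto
        then show ?thesis using t0 t1 nu0[of i] by simp
      next
        case False
        have "\<bar>?T u \<xi> $ i\<bar> * exp (- \<rho> * \<xi>) \<le> (\<nu> \<Lambda> $ i * exp (\<Lambda> * \<xi>)) * exp (- \<rho> * \<xi>)"
          using t0 t1 by (intro mult_right_mono) auto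
        also have "\<dots> = \<nu> \<Lambda> $ i * exp ((\<Lambda> - \<rho>) * \<xi>)" by (simp add: exp_add[symmetric] algebra_simps)
        also have "\<dots> \<le> \<nu> \<Lambda> $ i * 1"
          using False rho nu0[of i] by (intro mult_left_mono) (auto simp: mult_nonneg_nonpos)
        finally show ?thesis using kpos by (smt (verit))
      qed
    qed
    show "?T u \<in> ?A" unfolding Aset_def E_rho_def using Tc[OF u] lo hi gr by auto
  qed
  have c3: "\<forall>u \<in> ?A. (\<forall>i. mono (\<lambda>\<xi>. u \<xi> $ i)) \<longrightarrow> (\<forall>i. mono (\<lambda>\<xi>. ?T u \<xi> $ i))"
  proof (intro ballI impI allI monoI)
    fix u i and x y :: real assume uA: "u \<in> ?A" and mu: "\<forall>i. mono (\<lambda>\<xi>. u \<xi> $ i)" and xy: "x \<le> y"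
    have u: "Box u" using BA[OF uA] .
    have um: "u s \<le> u t" if "s \<le> t" for s t using mu that by (auto simp: less_eq_vec_def mono_def)
    show "?T u x $ i \<le> ?T u y $ i"
      by (rule TM[OF u u, where \<sigma>=1]) (use um xy in auto)
  qed
  show ?thesis using c1 c2 c3 by blast
qed

end
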